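(* If $(\Phi,\Phi_f,D)$ is a domain-free s-compact information algebra, then its associated labeled information algebra $(\Psi,D)$ is a labeled s-compact information algebra (with $\Gamma_x=\{(\psi,x):\psi\in\Phi_f,\ \psi=\psi^{\Rightarrow x}\}$).
   Context: A domain-free information algebra $(\Phi,D)$ consists of a set $\Phi$, a lattice $D$, a combination $\otimes$ and a focusing $(\psi,x)\mapsto\psi^{\Rightarrow x}$ ($x\in D$) such that: $\otimes$ is associative, commutative with neutral element $e$; $(\psi^{\Rightarrow y})^{\Rightarrow x}=\psi^{\Rightarrow x\wedge y}$; $(\phi^{\Rightarrow x}\otimes\psi)^{\Rightarrow x}=\phi^{\Rightarrow x}\otimes\psi^{\Rightarrow x}$; every $\psi$ has some $x$ with $\psi^{\Rightarrow x}=\psi$; $\psi\otimes\psi^{\Rightarrow x}=\psi$. In both domain-free and labeled algebras, $\psi\le\phi$ iff $\psi\otimes\phi=\phi$; suprema refer to this order. $a\ll b$ means: for every directed $X$ with $b\le\vee X$ there is $c\in X$ with $a\le c$; $\Phi_f=\{\phi\in\Phi:\phi\ll\phi\}$. A domain-free $(\Phi,D)$ with $D$ having a top element is s-compact if there exists $\Gamma\subseteq\Phi$, closed under combination and containing $e$, such that every directed subset of $\Gamma$ has a supremum in $\Phi$, $\phi^{\Rightarrow x}=\vee\{\psi\in\Gamma:\psi=\psi^{\Rightarrow x}\ll\phi\}$ for all $\phi\in\Phi$, $x\in D$, and for every directed $X\subseteq\Gamma$ and $\phi\in\Gamma$ with $\phi\le\vee X$ there is $\psi\in X$ with $\phi\le\psi$;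 then necessarily $\Gamma=\Phi_f$, and one writes $(\Phi,\Phi_f,D)$. The associated labeled information algebra is $(\Psi,D)$ with $\Psi=\{(\phi,x)\in\Phi\times D:\phi=\phi^{\Rightarrow x}\}$, labeling $d(\phi,x)=x$, combination $(\phi,x)\otimes(\psi,y)=(\phi\otimes\psi,x\vee y)$, marginalization $(\phi,x)^{\downarrow y}=(\phi^{\Rightarrow y},y)$ for $y\le x$; neutral elements $e_x=(e,x)$. For a labeled information algebra, $\Phi_x$ denotes the elements with label $x$ and $\ll_x$ the way-below relation of $(\Phi_x,\le)$. A labeled s-compact information algebra is $(\Phi,\{\Gamma_x\}_{x\in D},D)$ with $D$ having a top element $\top$ and, for each $x$, $\Gamma_x\subseteq\Phi_x$ closed under combination, containing $e_x$, such that: (convergency) every directed $X\subseteq\Gamma_x$ has a supremum $\vee X\in\Phi_x$; (strong density) for all $\phi\in\Phi_x$, $\phi=\vee\{\psi^{\downarrow x}\in\Gamma_x:\ \psi\in\Phi,\ x\le d(\psi),\ \psi^{\downarrow x}\otimes e_\top\in\Gamma_\top,\ \psi^{\downarrow x}\ll_x\phi\}$; (compactness) for every directed $X\subseteq\Gamma_x$ and $\phi\in\Gamma_x$ with $\phi\le\vee X$ there is $\psi\in X$ with $\phi\le\psi$. *)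

theory Defs
  imports Main
begin

definition directed_in :: "('a \<Rightarrow> 'a \<Rightarrow> bool) \<Rightarrow> 'a set \<Rightarrow> 'a set \<Rightarrow> bool" where
  "directed_in le C X \<longleftrightarrow> X \<subseteq> C \<and> X \<noteq> {} \<and>
     (\<forall>a\<in>X. \<forall>b\<in>X. \<exists>c\<in>X. le a c \<and> le b c)"

definition is_sup_in :: "('a \<Rightarrow> 'a \<Rightarrow> bool) \<Rightarrow> 'a set \<Rightarrow> 'a set \<Rightarrow> 'a \<Rightarrow> bool" where
  "is_sup_in le C X s \<longleftrightarrow> s \<in> C \<and> (\<forall>a\<in>X. le a s) \<and>
     (\<forall>u\<in>C. (\<forall>a\<in>X. le a u) \<longrightarrow> le s u)"

definition way_below_in :: "('a \<Rightarrow> 'a \<Rightarrow> bool) \<Rightarrow> 'a set \<Rightarrow> 'a \<Rightarrow> 'a \<Rightarrow> bool" where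
  "way_below_in le C a b \<longleftrightarrow>
     (\<forall>X s. directed_in le C X \<longrightarrow> is_sup_in le C X s \<longrightarrow> le b s \<longrightarrow> (\<exists>c\<in>X. le a c))"

text \<open>The carrier \<open>\<Phi>\<close> is the whole type \<open>'a\<close>, the lattice \<open>D\<close> is the type \<open>'d\<close>.\<close>
definition df_info_algebra ::
  "('a \<Rightarrow> 'a \<Rightarrow> 'a) \<Rightarrow> 'a \<Rightarrow> ('a \<Rightarrow> 'd::lattice \<Rightarrow> 'a) \<Rightarrow> bool" where
  "df_info_algebra comb e foc \<longleftrightarrow>
     (\<forall>a b c. comb (comb a b) c = comb a (comb b c)) \<and>
     (\<forall>a b. comb a b = comb b a) \<and>
     (\<forall>a. comb e a = a) \<and>
     (\<forall>\<psi> x y. foc (foc \<psi> y) x = foc \<psi> (inf x y)) \<and>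
     (\<forall>\<phi> \<psi> x. foc (comb (foc \<phi> x) \<psi>) x = comb (foc \<phi> x) (foc \<psi> x)) \<and>
     (\<forall>\<psi>. \<exists>x. foc \<psi> x = \<psi>) \<and>
     (\<forall>\<psi> x. comb \<psi> (foc \<psi> x) = \<psi>)"

definition df_le :: "('a \<Rightarrow> 'a \<Rightarrow> 'a) \<Rightarrow> 'a \<Rightarrow> 'a \<Rightarrow> bool" where
  "df_le comb \<psi> \<phi> \<longleftrightarrow> comb \<psi> \<phi> = \<phi>"

definition df_finite :: "('a \<Rightarrow> 'a \<Rightarrow> 'a) \<Rightarrow> 'a set" where
  "df_finite comb = {\<phi>. way_below_in (df_le comb) UNIV \<phi> \<phi>}"

definition df_s_compact ::
  "('a \<Rightarrow> 'a \<Rightarrow> 'a) \<Rightarrow> 'a \<Rightarrow> ('a \<Rightarrow> 'd::{lattice,order_top} \<Rightarrow> 'a) \<Rightarrow> 'a set \<Rightarrow> bool" where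
  "df_s_compact comb e foc \<Gamma> \<longleftrightarrow>
     (\<forall>a\<in>\<Gamma>. \<forall>b\<in>\<Gamma>. comb a b \<in> \<Gamma>) \<and> e \<in> \<Gamma> \<and>
     (\<forall>X. directed_in (df_le comb) \<Gamma> X \<longrightarrow> (\<exists>s. is_sup_in (df_le comb) UNIV X s)) \<and>
     (\<forall>\<phi> x. is_sup_in (df_le comb) UNIV
        {\<psi>\<in>\<Gamma>. \<psi> = foc \<psi> x \<and> way_below_in (df_le comb) UNIV \<psi> \<phi>} (foc \<phi> x)) \<and>
     (\<forall>X \<phi> s. directed_in (df_le comb) \<Gamma> X \<longrightarrow> \<phi> \<in> \<Gamma> \<longrightarrow>
        is_sup_in (df_le comb) UNIV X s \<longrightarrow> df_le comb \<phi> s \<longrightarrow> (\<exists>\<psi>\<in>X. df_le comb \<phi> \<psi>))"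

definition lab_carrier :: "('a \<Rightarrow> 'd \<Rightarrow> 'a) \<Rightarrow> ('a \<times> 'd) set" where
  "lab_carrier foc = {(\<phi>, x). \<phi> = foc \<phi> x}"

definition lab_label :: "'a \<times> 'd \<Rightarrow> 'd" where
  "lab_label p = snd p"

definition lab_comb :: "('a \<Rightarrow> 'a \<Rightarrow> 'a) \<Rightarrow> 'a \<times> 'd::lattice \<Rightarrow> 'a \<times> 'd \<Rightarrow> 'a \<times> 'd" where
  "lab_comb comb p q = (comb (fst p) (fst q), sup (snd p) (snd q))"

text \<open>Marginalization \<open>(\<phi>,x)\<^sup>\<down>y = (\<phi>\<^sup>\<Rightarrow>y, y)\<close>; only used for \<open>y \<le> x\<close>.\<close>
definition lab_marg :: "('a \<Rightarrow> 'd \<Rightarrow> 'a) \<Rightarrow> 'a \<times> 'd \<Rightarrow> 'd \<Rightarrow> 'a \<times> 'd" where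
  "lab_marg foc p y = (foc (fst p) y, y)"

definition lab_neutral :: "'a \<Rightarrow> 'd \<Rightarrow> 'a \<times> 'd" where
  "lab_neutral e x = (e, x)"

definition lab_le :: "('b \<Rightarrow> 'b \<Rightarrow> 'b) \<Rightarrow> 'b \<Rightarrow> 'b \<Rightarrow> bool" where
  "lab_le cb \<psi> \<phi> \<longleftrightarrow> cb \<psi> \<phi> = \<phi>"

definition Phi_at :: "'b set \<Rightarrow> ('b \<Rightarrow> 'd) \<Rightarrow> 'd \<Rightarrow> 'b set" where
  "Phi_at Psi d x = {\<phi>\<in>Psi. d \<phi> = x}"

definition lab_s_compact ::
  "'b set \<Rightarrow> ('b \<Rightarrow> 'd::{lattice,order_top}) \<Rightarrow> ('b \<Rightarrow> 'b \<Rightarrow> 'b) \<Rightarrow> ('b \<Rightarrow> 'd \<Rightarrow> 'b)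
    \<Rightarrow> ('d \<Rightarrow> 'b) \<Rightarrow> ('d \<Rightarrow> 'b set) \<Rightarrow> bool" where
  "lab_s_compact Psi d cb mg ne \<Gamma> \<longleftrightarrow>
     (\<forall>x. \<Gamma> x \<subseteq> Phi_at Psi d x \<and> ne x \<in> \<Gamma> x \<and>
          (\<forall>a\<in>\<Gamma> x. \<forall>b\<in>\<Gamma> x. cb a b \<in> \<Gamma> x)) \<and>
     \<comment> \<open>convergency\<close>
     (\<forall>x X. directed_in (lab_le cb) (\<Gamma> x) X \<longrightarrow>
        (\<exists>s. is_sup_in (lab_le cb) (Phi_at Psi d x) X s)) \<and>
     \<comment> \<open>strong density\<close>
     (\<forall>x. \<forall>\<phi>\<in>Phi_at Psi d x. is_sup_in (lab_le cb) (Phi_at Psi d x)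
        {mg \<psi> x | \<psi>. \<psi> \<in> Psi \<and> x \<le> d \<psi> \<and> mg \<psi> x \<in> \<Gamma> x \<and>
            cb (mg \<psi> x) (ne top) \<in> \<Gamma> top \<and>
            way_below_in (lab_le cb) (Phi_at Psi d x) (mg \<psi> x) \<phi>} \<phi>) \<and>
     \<comment> \<open>compactness\<close>
     (\<forall>x X \<phi> s. directed_in (lab_le cb) (\<Gamma> x) X \<longrightarrow> \<phi> \<in> \<Gamma> x \<longrightarrow>
        is_sup_in (lab_le cb) (Phi_at Psi d x) X s \<longrightarrow> lab_le cb \<phi> s \<longrightarrow>
        (\<exists>\<psi>\<in>X. lab_le cb \<phi> \<psi>))"

end

theory Submission
  imports Defs
begin

context
  fixes comb :: "'a \<Rightarrow> 'a \<Rightarrow> 'a" and e :: 'a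
    and foc :: "'a \<Rightarrow> 'd::{lattice,order_top} \<Rightarrow> 'a"
  assumes A: "df_info_algebra comb e foc"
begin

lemma ax_assoc: "comb (comb a b) c = comb a (comb b c)"
  using A unfolding df_info_algebra_def by blast
lemma ax_comm: "comb a b = comb b a"
  using A unfolding df_info_algebra_def by blast
lemma ax_neut: "comb e a = a"
  using A unfolding df_info_algebra_def by blast
lemma ax_ff: "foc (foc \<psi> y) x = foc \<psi> (inf x y)"
  using A unfolding df_info_algebra_def by blast
lemma ax_fc: "foc (comb (foc \<phi> x) \<psi>) x = comb (foc \<phi> x) (foc \<psi> x)"
  using A unfolding df_info_algebra_def by blast
lemma ax_sup: "\<exists>x. foc \<psi> x = \<psi>"
  using A unfolding df_info_algebra_def by blast
lemma ax_abs: "comb \<psi> (foc \<psi> x) = \<psi>"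
  using A unfolding df_info_algebra_def by blast

lemma idem: "comb a a = a"
  using ax_sup[of a] ax_abs[of a] by metis

lemma le_refl: "df_le comb a a"
  by (simp add: df_le_def idem)

lemma le_trans: "df_le comb a b \<Longrightarrow> df_le comb b c \<Longrightarrow> df_le comb a c"
  unfolding df_le_def proof -
  assume h: "comb a b = b" "comb b c = c"
  have "comb a c = comb a (comb b c)" using h by simp
  also have "\<dots> = comb (comb a b) c" by (simp only: ax_assoc)
  finally show "comb a c = c" using h by simp
qed

lemma le_antisym: "df_le comb a b \<Longrightarrow> df_le comb b a \<Longrightarrow> a = b"
  unfolding df_le_def using ax_comm[of a b] by simp

lemma foc_le: "df_le comb (foc a x) a"
  unfolding df_le_def using ax_abs[of a x] ax_comm[of "foc a x" a] by simp

lemma foc_mono: assumes "df_le comb a b" shows "df_le comb (foc a x) (foc b x)"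
proof -
  have b: "comb a b = b" using assms by (simp add: df_le_def)
  have "comb (foc a x) b = comb (foc a x) (comb a b)" using b by simp
  also have "\<dots> = comb (comb a (foc a x)) b" by (simp only: ax_assoc[symmetric] ax_comm[of "foc a x" a])
  also have "\<dots> = b" using b ax_abs by simp
  finally have "foc b x = foc (comb (foc a x) b) x" by simp
  also have "\<dots> = comb (foc a x) (foc b x)" by (rule ax_fc)
  finally show ?thesis by (simp add: df_le_def)
qed

lemma foc_e: "foc e x = e"
  using ax_abs[of e x] ax_neut[of "foc e x"] by simp

lemma foc_idem: "foc (foc a x) x = foc a x"
  by (simp add: ax_ff)

lemma foc_comb_supp: assumes "a = foc a x" "b = foc b x" shows "foc (comb a b) x = comb a b"
proof -
  have "foc (comb (foc a x) (foc b x)) x = comb (foc a x) (foc (foc b x) x)" by (rule ax_fc)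
  then show ?thesis by (simp only: assms(1)[symmetric] assms(2)[symmetric])
qed

lemma flip: "(a = foc a x) \<longleftrightarrow> (foc a x = a)" by auto

lemma lab_le_iff: "lab_le (lab_comb comb) p q \<longleftrightarrow> df_le comb (fst p) (fst q) \<and> snd p \<le> snd q"
  unfolding lab_le_def lab_comb_def df_le_def by (auto simp: prod_eq_iff le_iff_sup)

lemma Phi_at_iff: "p \<in> Phi_at (lab_carrier foc) lab_label x \<longleftrightarrow> snd p = x \<and> foc (fst p) x = fst p"
  by (cases p) (auto simp: Phi_at_def lab_carrier_def lab_label_def flip)

lemma dir_proj:
  assumes "directed_in (lab_le (lab_comb comb)) C X"
  shows "directed_in (df_le comb) UNIV (fst ` X)"
  using assms unfolding directed_in_def lab_le_iff by fastforce

lemma sup_to_df: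
  assumes X: "X \<subseteq> Phi_at (lab_carrier foc) lab_label x"
    and S: "is_sup_in (lab_le (lab_comb comb)) (Phi_at (lab_carrier foc) lab_label x) X s"
  shows "is_sup_in (df_le comb) UNIV (fst ` X) (fst s)" "snd s = x" "foc (fst s) x = fst s"
proof -
  let ?P = "Phi_at (lab_carrier foc) lab_label x"
  have sP: "s \<in> ?P" and ub: "\<forall>a\<in>X. lab_le (lab_comb comb) a s"
    and least: "\<forall>u\<in>?P. (\<forall>a\<in>X. lab_le (lab_comb comb) a u) \<longrightarrow> lab_le (lab_comb comb) s u"
    using S unfolding is_sup_in_def by auto
  show "snd s = x" "foc (fst s) x = fst s" using sP Phi_at_iff by blast+
  have "df_le comb (fst s) u" if u: "\<forall>a\<in>fst ` X. df_le comb a u" for u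
  proof -
    have uP: "(foc u x, x) \<in> ?P" by (simp add: Phi_at_iff foc_idem)
    have "\<forall>a\<in>X. lab_le (lab_comb comb) a (foc u x, x)"
    proof
      fix a assume aX: "a \<in> X"
      then have ax: "snd a = x" "foc (fst a) x = fst a" using X Phi_at_iff by blast+
      moreover have "df_le comb (fst a) u" using u aX by auto
      then have "df_le comb (foc (fst a) x) (foc u x)" by (rule foc_mono)
      then have "df_le comb (fst a) (foc u x)" by (simp only: ax(2))
      ultimately show "lab_le (lab_comb comb) a (foc u x, x)"
        by (simp add: lab_le_iff)
    qed
    with least uP have "lab_le (lab_comb comb) s (foc u x, x)" by blast
    then have "df_le comb (fst s) (foc u x)" by (simp add: lab_le_iff)
    then show ?thesis using foc_le le_trans by blast
  qed
  then show "is_sup_in (df_le comb) UNIV (fst ` X) (fst s)"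
    using ub unfolding is_sup_in_def lab_le_iff by auto
qed

lemma sup_from_df:
  assumes X: "X \<subseteq> Phi_at (lab_carrier foc) lab_label x"
    and S: "is_sup_in (df_le comb) UNIV (fst ` X) s"
  shows "is_sup_in (lab_le (lab_comb comb)) (Phi_at (lab_carrier foc) lab_label x) X (s, x)"
proof -
  have ub: "\<forall>a\<in>fst ` X. df_le comb a s" and least: "\<forall>u. (\<forall>a\<in>fst ` X. df_le comb a u) \<longrightarrow> df_le comb s u"
    using S unfolding is_sup_in_def by auto
  have "\<forall>a\<in>fst ` X. df_le comb a (foc s x)"
  proof
    fix a assume "a \<in> fst ` X"
    then obtain p where p: "p \<in> X" "a = fst p" by blast
    then have fa: "foc a x = a" using X Phi_at_iff by blast
    have "df_le comb a s" using ub p by blast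
    then have "df_le comb (foc a x) (foc s x)" by (rule foc_mono)
    then show "df_le comb a (foc s x)" by (simp only: fa)
  qed
  then have "df_le comb s (foc s x)" using least by blast
  then have sx: "foc s x = s" using foc_le le_antisym by blast
  show ?thesis unfolding is_sup_in_def
  proof (intro conjI ballI impI)
    show "(s, x) \<in> Phi_at (lab_carrier foc) lab_label x" using sx by (simp add: Phi_at_iff)
    fix a assume aX: "a \<in> X"
    then have "snd a = x" using X Phi_at_iff by blast
    moreover have "df_le comb (fst a) s" using ub aX by blast
    ultimately show "lab_le (lab_comb comb) a (s, x)" by (simp add: lab_le_iff)
  next
    fix u assume uP: "u \<in> Phi_at (lab_carrier foc) lab_label x"
      and "\<forall>a\<in>X. lab_le (lab_comb comb) a u"
    then have "\<forall>a\<in>fst ` X. df_le comb a (fst u)" by (auto simp: lab_le_iff)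
    then show "lab_le (lab_comb comb) (s, x) u" using least uP by (auto simp: lab_le_iff Phi_at_iff)
  qed
qed

lemma wb_transfer:
  assumes "way_below_in (df_le comb) UNIV \<chi> \<phi>"
  shows "way_below_in (lab_le (lab_comb comb)) (Phi_at (lab_carrier foc) lab_label x) (\<chi>, x) (\<phi>, x)"
  unfolding way_below_in_def
proof (intro allI impI)
  fix X s
  assume D: "directed_in (lab_le (lab_comb comb)) (Phi_at (lab_carrier foc) lab_label x) X"
    and S: "is_sup_in (lab_le (lab_comb comb)) (Phi_at (lab_carrier foc) lab_label x) X s"
    and le: "lab_le (lab_comb comb) (\<phi>, x) s"
  have XP: "X \<subseteq> Phi_at (lab_carrier foc) lab_label x" using D by (simp add: directed_in_def)
  have D': "directed_in (df_le comb) UNIV (fst ` X)" using dir_proj[OF D] .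
  have S': "is_sup_in (df_le comb) UNIV (fst ` X) (fst s)" using sup_to_df[OF XP S] by blast
  have "df_le comb \<phi> (fst s)" using le by (simp add: lab_le_iff)
  then obtain c where "c \<in> fst ` X" "df_le comb \<chi> c"
    using assms D' S' unfolding way_below_in_def by blast
  then obtain p where "p \<in> X" "df_le comb \<chi> (fst p)" by auto
  moreover then have "snd p = x" using XP Phi_at_iff by blast
  ultimately show "\<exists>c\<in>X. lab_le (lab_comb comb) (\<chi>, x) c" by (auto simp: lab_le_iff)
qed

lemma wb_le:
  assumes "way_below_in (lab_le (lab_comb comb)) (Phi_at (lab_carrier foc) lab_label x) a b"
    and "b \<in> Phi_at (lab_carrier foc) lab_label x"
  shows "lab_le (lab_comb comb) a b"
proof -
  have refl: "lab_le (lab_comb comb) b b" by (simp add: lab_le_iff le_refl)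
  have "directed_in (lab_le (lab_comb comb)) (Phi_at (lab_carrier foc) lab_label x) {b}"
    using assms(2) refl by (simp add: directed_in_def)
  moreover have "is_sup_in (lab_le (lab_comb comb)) (Phi_at (lab_carrier foc) lab_label x) {b} b"
    using assms(2) refl by (simp add: is_sup_in_def)
  ultimately show ?thesis using assms(1) refl unfolding way_below_in_def by blast
qed

end

theorem theorem4p8:
  fixes comb :: "'a \<Rightarrow> 'a \<Rightarrow> 'a" and e :: 'a
    and foc :: "'a \<Rightarrow> 'd::{lattice,order_top} \<Rightarrow> 'a"
  assumes "df_info_algebra comb e foc"
    and "df_s_compact comb e foc (df_finite comb)"
  shows "lab_s_compact (lab_carrier foc) lab_label (lab_comb comb) (lab_marg foc)
           (lab_neutral e)
           (\<lambda>x. {(\<psi>, x) | \<psi>. \<psi> \<in> df_finite comb \<and> \<psi> = foc \<psi> x})"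
proof -
  let ?P = "\<lambda>x. Phi_at (lab_carrier foc) lab_label x"
  let ?L = "lab_le (lab_comb comb)"
  let ?F = "df_finite comb"
  let ?G = "\<lambda>x::'d. {(\<psi>, x) | \<psi>. \<psi> \<in> ?F \<and> \<psi> = foc \<psi> x}"
  note A = assms(1)
  note H = assms(2)[unfolded df_s_compact_def]
  note clos = H[THEN conjunct1] and eF = H[THEN conjunct2, THEN conjunct1]
    and conv = H[THEN conjunct2, THEN conjunct2, THEN conjunct1]
    and dens = H[THEN conjunct2, THEN conjunct2, THEN conjunct2, THEN conjunct1]
    and comp = H[THEN conjunct2, THEN conjunct2, THEN conjunct2, THEN conjunct2]
  have Giff: "p \<in> ?G x \<longleftrightarrow> snd p = x \<and> fst p \<in> ?F \<and> foc (fst p) x = fst p" for p x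
    by (cases p) (auto simp: flip)
  have Piff: "p \<in> ?P x \<longleftrightarrow> snd p = x \<and> foc (fst p) x = fst p" for p x
    using Phi_at_iff[OF A] by metis
  have GP: "?G x \<subseteq> ?P x" for x using Giff Piff by blast
  have part1: "\<forall>x. ?G x \<subseteq> ?P x \<and> lab_neutral e x \<in> ?G x \<and>
          (\<forall>a\<in>?G x. \<forall>b\<in>?G x. lab_comb comb a b \<in> ?G x)"
  proof (intro allI conjI ballI)
    fix x
    show "?G x \<subseteq> ?P x" by (rule GP)
    show "lab_neutral e x \<in> ?G x" using eF foc_e[OF A] by (simp add: lab_neutral_def)
    fix a b assume "a \<in> ?G x" "b \<in> ?G x"
    then show "lab_comb comb a b \<in> ?G x"
      unfolding Giff using clos foc_comb_supp[OF A] by (simp add: lab_comb_def)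
  qed
  have dirG: "directed_in (df_le comb) ?F (fst ` X)" if D: "directed_in ?L (?G x) X" for X x
  proof -
    have "fst ` X \<subseteq> ?F" using D Giff unfolding directed_in_def by blast
    then show ?thesis using dir_proj[OF A D] unfolding directed_in_def by blast
  qed
  have part2: "\<forall>x X. directed_in ?L (?G x) X \<longrightarrow> (\<exists>s. is_sup_in ?L (?P x) X s)"
  proof (intro allI impI)
    fix x X assume D: "directed_in ?L (?G x) X"
    have XP: "X \<subseteq> ?P x" using D GP unfolding directed_in_def by blast
    obtain s where "is_sup_in (df_le comb) UNIV (fst ` X) s" using conv dirG[OF D] by blast
    then show "\<exists>s. is_sup_in ?L (?P x) X s" using sup_from_df[OF A XP] by blast
  qed
  have part4: "\<forall>x X \<phi> s. directed_in ?L (?G x) X \<longrightarrow> \<phi> \<in> ?G x \<longrightarrow>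
        is_sup_in ?L (?P x) X s \<longrightarrow> ?L \<phi> s \<longrightarrow> (\<exists>\<psi>\<in>X. ?L \<phi> \<psi>)"
  proof (intro allI impI)
    fix x X \<phi> s assume D: "directed_in ?L (?G x) X" and \<phi>G: "\<phi> \<in> ?G x"
      and S: "is_sup_in ?L (?P x) X s" and le: "?L \<phi> s"
    have XP: "X \<subseteq> ?P x" using D GP unfolding directed_in_def by blast
    have S': "is_sup_in (df_le comb) UNIV (fst ` X) (fst s)" using sup_to_df[OF A XP S] by blast
    have "fst \<phi> \<in> ?F" using \<phi>G Giff by blast
    moreover have "df_le comb (fst \<phi>) (fst s)" using le by (simp add: lab_le_iff[OF A])
    ultimately obtain c where "c \<in> fst ` X" "df_le comb (fst \<phi>) c"
      using comp dirG[OF D] S' by blast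
    then obtain p where pX: "p \<in> X" and "df_le comb (fst \<phi>) (fst p)" by auto
    moreover have "snd p = x" using XP pX Phi_at_iff[OF A] by blast
    moreover have "snd \<phi> = x" using \<phi>G Giff by blast
    ultimately show "\<exists>\<psi>\<in>X. ?L \<phi> \<psi>" by (auto simp: lab_le_iff[OF A])
  qed
  have part3: "\<forall>x. \<forall>\<phi>\<in>?P x. is_sup_in ?L (?P x)
        {lab_marg foc \<psi> x | \<psi>. \<psi> \<in> lab_carrier foc \<and> x \<le> lab_label \<psi> \<and> lab_marg foc \<psi> x \<in> ?G x \<and>
            lab_comb comb (lab_marg foc \<psi> x) (lab_neutral e top) \<in> ?G top \<and>
            way_below_in ?L (?P x) (lab_marg foc \<psi> x) \<phi>} \<phi>"
  proof (intro allI ballI)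
    fix x \<phi> assume \<phi>P: "\<phi> \<in> ?P x"
    define S where "S = {lab_marg foc \<psi> x | \<psi>. \<psi> \<in> lab_carrier foc \<and> x \<le> lab_label \<psi> \<and> lab_marg foc \<psi> x \<in> ?G x \<and>
            lab_comb comb (lab_marg foc \<psi> x) (lab_neutral e top) \<in> ?G top \<and>
            way_below_in ?L (?P x) (lab_marg foc \<psi> x) \<phi>}"
    obtain f where \<phi>eq: "\<phi> = (f, x)" and fx: "foc f x = f" using \<phi>P Piff
      by (metis prod.collapse)
    define T where "T = {\<psi>\<in>?F. \<psi> = foc \<psi> x \<and> way_below_in (df_le comb) UNIV \<psi> f}"
    have "is_sup_in (df_le comb) UNIV T (foc f x)" using dens unfolding T_def by blast
    then have dT: "is_sup_in (df_le comb) UNIV T f" by (simp only: fx)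
    have TS: "(\<chi>, x) \<in> S" if "\<chi> \<in> T" for \<chi>
    proof -
      have c: "\<chi> \<in> ?F" "foc \<chi> x = \<chi>" "way_below_in (df_le comb) UNIV \<chi> f"
        using that unfolding T_def by (blast, metis (mono_tags, lifting) mem_Collect_eq, blast)
      have m: "lab_marg foc (\<chi>, x) x = (\<chi>, x)" using c by (simp add: lab_marg_def)
      have "foc \<chi> top = \<chi>" using c(2) ax_ff[OF A, of \<chi> x top] inf_absorb2[OF top_greatest, of x] by metis
      then have "lab_comb comb (\<chi>, x) (lab_neutral e top) \<in> ?G top"
        unfolding Giff using c ax_comm[OF A] ax_neut[OF A] sup_absorb2[OF top_greatest, of x] by (simp add: lab_comb_def lab_neutral_def)
      moreover have "(\<chi>, x) \<in> lab_carrier foc" using c by (simp add: lab_carrier_def flip)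
      moreover have "way_below_in ?L (?P x) (\<chi>, x) \<phi>" using wb_transfer[OF A c(3)] \<phi>eq by simp
      ultimately show ?thesis unfolding S_def
        apply (intro CollectI exI[of _ "(\<chi>, x)"])
        using c m by (simp add: lab_label_def Giff)
    qed
    have SP: "S \<subseteq> ?P x" unfolding S_def using GP by blast
    have Sle: "?L s \<phi>" if "s \<in> S" for s
      using that wb_le[OF A _ \<phi>P] unfolding S_def by blast
    show "is_sup_in ?L (?P x) S \<phi>" unfolding is_sup_in_def
    proof (intro conjI ballI impI)
      show "\<phi> \<in> ?P x" by (rule \<phi>P)
      fix s assume "s \<in> S" then show "?L s \<phi>" by (rule Sle)
    next
      fix u assume uP: "u \<in> ?P x" and ub: "\<forall>a\<in>S. ?L a u"
      have "\<forall>a\<in>T. df_le comb a (fst u)" using ub TS by (fastforce simp: lab_le_iff[OF A])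
      then have "df_le comb f (fst u)" using dT unfolding is_sup_in_def by blast
      then show "?L \<phi> u" using uP \<phi>eq Piff by (auto simp: lab_le_iff[OF A])
    qed
  qed
  show ?thesis unfolding lab_s_compact_def
    by (intro conjI; fact)
qed

end
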